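(* The space $\mathtt{CA}$ with the pointwise topology has the following properties: (1) it is countable; (2) it is Hausdorff; (3) it is not compact; (4) it is perfect (has no isolated points); (5) it is totally disconnected; (6) it is of first category; (7) no point has a countable neighborhood basis (so the space is not first-countable, hence neither metrizable nor second-countable); (8) it is normal; (9) it is not sequential.
   Context: $\Sigma$ is a finite alphabet with $|\Sigma|\ge 2$, and $\Sigma^\mathbb{Z}$ carries the product (Cantor) topology. The shift $\sigma$ is $\sigma(x)_i=x_{i+1}$. A cellular automaton (CA) is a continuous map $c:\Sigma^\mathbb{Z}\to\Sigma^\mathbb{Z}$ with $c\circ\sigma=\sigma\circ c$; $\mathtt{CA}$ is the set of all CA. The pointwise topology on $\mathtt{CA}$ is generated by the subbase $U_x(a)=\{c\in\mathtt{CA}\mid c(x)_0=a\}$, $x\in\Sigma^\mathbb{Z}$, $a\in\Sigma$. A space is sequential if its sequentially closed subsets (those containing the limits of all their convergent sequences) are exactly its closed subsets; it is of first category if it is a countable union of nowhere dense sets. *)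

theory Defs
  imports "HOL-Analysis.Analysis" "HOL-Library.Countable_Set"
begin

definition cantor_top :: "(int \<Rightarrow> 'a) topology" where
  "cantor_top = product_topology (\<lambda>_::int. discrete_topology (UNIV :: 'a set)) UNIV"

definition shift :: "(int \<Rightarrow> 'a) \<Rightarrow> (int \<Rightarrow> 'a)" where
  "shift x = (\<lambda>i. x (i + 1))"

definition CA :: "((int \<Rightarrow> 'a) \<Rightarrow> (int \<Rightarrow> 'a)) set" where
  "CA = {c. continuous_map cantor_top cantor_top c \<and> c \<circ> shift = shift \<circ> c}"

definition U_sub :: "(int \<Rightarrow> 'a) \<Rightarrow> 'a \<Rightarrow> ((int \<Rightarrow> 'a) \<Rightarrow> (int \<Rightarrow> 'a)) set" where
  "U_sub x a = {c \<in> CA. c x 0 = a}"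

definition pointwise_top :: "((int \<Rightarrow> 'a) \<Rightarrow> (int \<Rightarrow> 'a)) topology" where
  "pointwise_top = topology_generated_by {U_sub x a | x a. True}"

definition no_isolated_points :: "'b topology \<Rightarrow> bool" where
  "no_isolated_points X \<longleftrightarrow> (\<forall>p \<in> topspace X. \<not> openin X {p})"

definition totally_disconnected_space :: "'b topology \<Rightarrow> bool" where
  "totally_disconnected_space X \<longleftrightarrow>
     (\<forall>S. S \<subseteq> topspace X \<and> connectedin X S \<longrightarrow> (\<exists>a. S \<subseteq> {a}))"

definition nowhere_dense_in :: "'b topology \<Rightarrow> 'b set \<Rightarrow> bool" where
  "nowhere_dense_in X S \<longleftrightarrow> S \<subseteq> topspace X \<and> X interior_of (X closure_of S) = {}"

definition first_category :: "'b topology \<Rightarrow> bool" where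
  "first_category X \<longleftrightarrow>
     (\<exists>F. countable F \<and> (\<forall>S \<in> F. nowhere_dense_in X S) \<and> \<Union>F = topspace X)"

definition countable_nbhd_basis_at :: "'b topology \<Rightarrow> 'b \<Rightarrow> bool" where
  "countable_nbhd_basis_at X p \<longleftrightarrow>
     (\<exists>B. countable B \<and> (\<forall>N \<in> B. N \<subseteq> topspace X \<and> p \<in> X interior_of N) \<and>
          (\<forall>V. V \<subseteq> topspace X \<and> p \<in> X interior_of V \<longrightarrow> (\<exists>N \<in> B. N \<subseteq> V)))"

definition sequentially_closedin :: "'b topology \<Rightarrow> 'b set \<Rightarrow> bool" where
  "sequentially_closedin X S \<longleftrightarrow> S \<subseteq> topspace X \<and>
     (\<forall>s l. (\<forall>n. s n \<in> S) \<and> limitin X s l sequentially \<longrightarrow> l \<in> S)"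

definition sequential_space :: "'b topology \<Rightarrow> bool" where
  "sequential_space X \<longleftrightarrow> (\<forall>S. sequentially_closedin X S \<longleftrightarrow> closedin X S)"

end

theory Submission
  imports Defs "HOL-Probability.Probability"
begin


definition sh :: "int \<Rightarrow> (int \<Rightarrow> 'a) \<Rightarrow> (int \<Rightarrow> 'a)" where
  "sh k x = (\<lambda>j. x (j + k))"

lemma topspace_cantor[simp]: "topspace cantor_top = UNIV"
  by (simp add: cantor_top_def)

lemma cont_disc_iff:
  "continuous_map cantor_top (discrete_topology UNIV) (h :: (int \<Rightarrow> 'a) \<Rightarrow> 'b) \<longleftrightarrow>
   (\<forall>y. \<exists>J. finite J \<and> (\<forall>z. (\<forall>j\<in>J. z j = y j) \<longrightarrow> h z = h y))"
proof
  assume c: "continuous_map cantor_top (discrete_topology UNIV) h"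
  show "\<forall>y. \<exists>J. finite J \<and> (\<forall>z. (\<forall>j\<in>J. z j = y j) \<longrightarrow> h z = h y)"
  proof
    fix y
    have "\<forall>U. openin cantor_top {z. h z \<in> U}"
      using c unfolding continuous_map_def by simp
    then have "openin cantor_top {z. h z \<in> {h y}}" by blast
    then have "openin cantor_top {z. h z = h y}" by simp
    then obtain U where U: "finite {i \<in> UNIV. U i \<noteq> topspace (discrete_topology (UNIV::'a set))}"
      "y \<in> Pi\<^sub>E UNIV U" "Pi\<^sub>E UNIV U \<subseteq> {z. h z = h y}"
      unfolding cantor_top_def openin_product_topology_alt by blast
    have yU: "y i \<in> U i" for i using U(2) by (simp add: PiE_UNIV_domain Pi_iff)
    show "\<exists>J. finite J \<and> (\<forall>z. (\<forall>j\<in>J. z j = y j) \<longrightarrow> h z = h y)"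
    proof (intro exI conjI allI impI)
      show "finite {i. U i \<noteq> UNIV}" using U(1) by simp
      fix z assume zJ: "\<forall>j\<in>{i. U i \<noteq> UNIV}. z j = y j"
      have "z i \<in> U i" for i
      proof (cases "U i = UNIV")
        case True then show ?thesis by simp
      next
        case False then show ?thesis using zJ yU[of i] by simp
      qed
      then have "z \<in> Pi\<^sub>E UNIV U" by (simp add: PiE_UNIV_domain Pi_iff)
      then show "h z = h y" using U(3) by blast
    qed
  qed
next
  assume L: "\<forall>y. \<exists>J. finite J \<and> (\<forall>z. (\<forall>j\<in>J. z j = y j) \<longrightarrow> h z = h y)"
  show "continuous_map cantor_top (discrete_topology UNIV) h"
    unfolding continuous_map_def
  proof (intro conjI allI impI)
    fix A :: "'b set"
    have "openin (product_topology (\<lambda>_. discrete_topology (UNIV::'a set)) UNIV) {x. h x \<in> A}"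
      unfolding openin_product_topology_alt
    proof
      fix y assume y: "y \<in> {x. h x \<in> A}"
      obtain J where J: "finite J" "\<And>z. \<forall>j\<in>J. z j = y j \<Longrightarrow> h z = h y" using L by blast
      define U where "U = (\<lambda>i. if i \<in> J then {y i} else (UNIV::'a set))"
      have sub: "Pi\<^sub>E UNIV U \<subseteq> {x. h x \<in> A}"
      proof
        fix x assume "x \<in> Pi\<^sub>E UNIV U"
        then have xU: "x i \<in> U i" for i by (simp add: PiE_UNIV_domain Pi_iff)
        have xJ: "\<forall>j\<in>J. x j = y j"
        proof
          fix j assume "j \<in> J" then show "x j = y j" using xU[of j] by (simp add: U_def)
        qed
        show "x \<in> {x. h x \<in> A}" using J(2)[OF xJ] y by simp
      qed
      have fin: "finite {i \<in> UNIV. U i \<noteq> topspace (discrete_topology UNIV)}"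
        by (rule finite_subset[OF _ J(1)]) (auto simp: U_def)
      have yU: "y \<in> Pi\<^sub>E UNIV U" by (simp add: PiE_UNIV_domain Pi_iff U_def)
      show "\<exists>U. finite {i \<in> UNIV. U i \<noteq> topspace (discrete_topology UNIV)} \<and>
             (\<forall>i\<in>UNIV. openin (discrete_topology UNIV) (U i)) \<and> y \<in> Pi\<^sub>E UNIV U \<and>
             Pi\<^sub>E UNIV U \<subseteq> {x. h x \<in> A}"
        using fin yU sub by (intro exI[of _ U]) simp
    qed
    then show "openin cantor_top {x \<in> topspace cantor_top. h x \<in> A}"
      by (simp add: cantor_top_def)
  qed auto
qed

lemma CA_coord_cont:
  assumes "c \<in> CA" shows "continuous_map cantor_top (discrete_topology UNIV) (\<lambda>y. c y i)"
proof -
  have "continuous_map cantor_top cantor_top c" using assms by (simp add: CA_def)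
  moreover have "continuous_map cantor_top (discrete_topology UNIV) (\<lambda>x::int\<Rightarrow>'a. x i)"
    unfolding cantor_top_def by (rule continuous_map_product_projection) simp
  ultimately show ?thesis using continuous_map_compose[of cantor_top cantor_top c] by (simp add: o_def)
qed

lemma CA_local:
  assumes "c \<in> CA" shows "\<exists>J. finite J \<and> (\<forall>z. (\<forall>j\<in>J. z j = y j) \<longrightarrow> c z i = c y i)"
  using CA_coord_cont[OF assms] unfolding cont_disc_iff by blast

lemma CA_shift: "c \<in> CA \<Longrightarrow> c (Defs.shift x) = Defs.shift (c x)"
  unfolding CA_def by (auto dest: fun_cong[where x=x])

lemma sh_1: "sh 1 = Defs.shift" by (auto simp: sh_def Defs.shift_def fun_eq_iff)

lemma CA_sh_nat: "c \<in> CA \<Longrightarrow> c (sh (int n) x) = sh (int n) (c x)"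
proof (induction n arbitrary: x)
  case 0 then show ?case by (simp add: sh_def)
next
  case (Suc n)
  have "sh (int (Suc n)) x = Defs.shift (sh (int n) x)" by (auto simp: sh_def Defs.shift_def fun_eq_iff algebra_simps)
  moreover have "sh (int (Suc n)) (c x) = Defs.shift (sh (int n) (c x))" by (auto simp: sh_def Defs.shift_def fun_eq_iff algebra_simps)
  ultimately show ?case using Suc CA_shift by metis
qed

lemma CA_sh: assumes "c \<in> CA" shows "c (sh k x) = sh k (c x)"
proof (cases "k \<ge> 0")
  case True then show ?thesis using CA_sh_nat[OF assms, of "nat k"] by simp
next
  case False
  define n where "n = nat (-k)"
  have k: "k = - int n" using False by (simp add: n_def)
  have "x = sh (int n) (sh k x)" by (simp add: sh_def k)
  then have "c x = sh (int n) (c (sh k x))" using CA_sh_nat[OF assms] by metis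
  then show ?thesis by (auto simp: sh_def k fun_eq_iff)
qed

lemma CA_coord: "c \<in> CA \<Longrightarrow> c x i = c (sh i x) 0"
  using CA_sh[of c i x] by (simp add: sh_def)

lemma CA_ext: assumes "c \<in> CA" "d \<in> CA" "\<And>y. c y 0 = d y 0" shows "c = d"
proof (rule ext)+
  fix x i
  have "c x i = c (sh i x) 0" by (rule CA_coord[OF assms(1)])
  also have "\<dots> = d (sh i x) 0" by (rule assms(3))
  also have "\<dots> = d x i" by (rule CA_coord[OF assms(2), symmetric])
  finally show "c x i = d x i" .
qed

lemma cyl_open: "openin cantor_top {z. \<forall>j\<in>J. z j = w j}" if "finite J"
proof -
  have "continuous_map cantor_top (discrete_topology UNIV) (\<lambda>z. \<forall>j\<in>J. z j = (w::int\<Rightarrow>'a) j)"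
    unfolding cont_disc_iff
  proof
    fix y :: "int \<Rightarrow> 'a"
    show "\<exists>J'. finite J' \<and> (\<forall>z. (\<forall>j\<in>J'. z j = y j) \<longrightarrow> (\<forall>j\<in>J. z j = w j) = (\<forall>j\<in>J. y j = w j))"
      by (rule exI[of _ J]) (simp add: that)
  qed
  then have "\<forall>U. openin cantor_top {z. (\<forall>j\<in>J. z j = w j) \<in> U}"
    unfolding continuous_map_def by simp
  then have "openin cantor_top {z. (\<forall>j\<in>J. z j = w j) \<in> {True}}" by blast
  then show ?thesis by simp
qed

lemma compact_cantor: "compact_space (cantor_top :: (int \<Rightarrow> 'a::finite) topology)"
  unfolding cantor_top_def compact_space_product_topology compact_space_discrete_topology by simp

lemma CA_uniform:
  assumes c: "(c :: (int \<Rightarrow> 'a::finite) \<Rightarrow> (int \<Rightarrow> 'a)) \<in> CA"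
  shows "\<exists>J. finite J \<and> (\<forall>y z. (\<forall>j\<in>J. y j = z j) \<longrightarrow> c y 0 = c z 0)"
proof -
  have "\<forall>y. \<exists>J. finite J \<and> (\<forall>z. (\<forall>j\<in>J. z j = y j) \<longrightarrow> c z 0 = c y 0)" using CA_local[OF c] by blast
  then have "\<exists>Jf. \<forall>y. finite (Jf y) \<and> (\<forall>z. (\<forall>j\<in>Jf y. z j = y j) \<longrightarrow> c z 0 = c y 0)"
    by (rule choice)
  then obtain Jf where Jf: "\<And>y. finite (Jf y)" "\<And>y z. (\<forall>j\<in>Jf y. z j = y j) \<Longrightarrow> c z 0 = c y 0"
    by blast
  define Cy where "Cy y = {z. \<forall>j\<in>Jf y. z j = y j}" for y
  have "compactin cantor_top (UNIV :: (int \<Rightarrow> 'a) set)"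
    using compact_cantor unfolding compact_space_def by simp
  moreover have "\<forall>U\<in>range Cy. openin cantor_top U" using cyl_open Jf(1) by (auto simp: Cy_def)
  moreover have "UNIV \<subseteq> \<Union>(range Cy)" by (auto simp: Cy_def)
  ultimately have "\<exists>F. finite F \<and> F \<subseteq> range Cy \<and> UNIV \<subseteq> \<Union>F"
    unfolding compactin_def by blast
  then obtain F where F: "finite F" "F \<subseteq> range Cy" "UNIV \<subseteq> \<Union>F" by blast
  then obtain Y0 where Y0: "finite Y0" "F = Cy ` Y0" by (meson finite_subset_image)
  show ?thesis
  proof (intro exI conjI allI impI)
    show "finite (\<Union>(Jf ` Y0))" using Y0 Jf(1) by blast
    fix y z :: "int \<Rightarrow> 'a" assume yz: "\<forall>j\<in>\<Union>(Jf ` Y0). y j = z j"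
    obtain y0 where y0: "y0 \<in> Y0" "y \<in> Cy y0" using F(3) Y0(2) by blast
    have "z \<in> Cy y0" using y0 yz by (auto simp: Cy_def)
    have 1: "c y 0 = c y0 0" by (rule Jf(2)) (use y0 in \<open>simp add: Cy_def\<close>)
    have 2: "c z 0 = c y0 0" by (rule Jf(2)) (use \<open>z \<in> Cy y0\<close> in \<open>simp add: Cy_def\<close>)
    show "c y 0 = c z 0" by (simp add: 1 2)
  qed
qed

lemma countable_CA: "countable (CA :: ((int \<Rightarrow> 'a::finite) \<Rightarrow> (int \<Rightarrow> 'a)) set)"
proof -
  define A where "A J = {c \<in> (CA :: ((int \<Rightarrow> 'a) \<Rightarrow> (int \<Rightarrow> 'a)) set). \<forall>y z. (\<forall>j\<in>J. y j = z j) \<longrightarrow> c y 0 = c z 0}" for J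
  have fin: "finite (A J)" if J: "finite J" for J
  proof -
    define T where "T = {t::int\<Rightarrow>'a. \<forall>x. (x \<in> J \<longrightarrow> t x \<in> UNIV) \<and> (x \<notin> J \<longrightarrow> t x = undefined)}"
    have fT: "finite T" unfolding T_def by (rule finite_set_of_finite_funs) (use J in auto)
    define tr where "tr y = (\<lambda>j. if j \<in> J then y j else undefined)" for y :: "int \<Rightarrow> 'a"
    have trT: "tr y \<in> T" for y by (auto simp: tr_def T_def)
    have inj: "inj_on (\<lambda>c. restrict (\<lambda>t. c t 0) T) (A J)"
    proof (rule inj_onI)
      fix c d assume c: "c \<in> A J" and d: "d \<in> A J" and e: "restrict (\<lambda>t. c t 0) T = restrict (\<lambda>t. d t 0) T"
      show "c = d"
      proof (rule CA_ext)
        show "c \<in> CA" "d \<in> CA" using c d by (auto simp: A_def)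
        fix y
        have cA: "\<forall>y z. (\<forall>j\<in>J. y j = z j) \<longrightarrow> c y 0 = c z 0" using c by (simp add: A_def)
        have dA: "\<forall>y z. (\<forall>j\<in>J. y j = z j) \<longrightarrow> d y 0 = d z 0" using d by (simp add: A_def)
        have "c y 0 = c (tr y) 0" using cA[rule_format, of y "tr y"] by (simp add: tr_def)
        also have "\<dots> = d (tr y) 0"
        proof -
          have "restrict (\<lambda>t. c t 0) T (tr y) = restrict (\<lambda>t. d t 0) T (tr y)" using e by simp
          then show ?thesis using trT[of y] by simp
        qed
        also have "\<dots> = d y 0" using dA[rule_format, of "tr y" y] by (simp add: tr_def)
        finally show "c y 0 = d y 0" .
      qed
    qed
    have "(\<lambda>c. restrict (\<lambda>t. c t 0) T) ` A J \<subseteq> Pi\<^sub>E T (\<lambda>_. UNIV)" by auto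
    moreover have "finite (Pi\<^sub>E T (\<lambda>_. (UNIV :: 'a set)))" using fT by (simp add: finite_PiE)
    ultimately show ?thesis by (rule inj_on_finite[OF inj])
  qed
  have "CA \<subseteq> (\<Union>J\<in>Collect finite. A J)"
  proof
    fix c :: "(int \<Rightarrow> 'a) \<Rightarrow> (int \<Rightarrow> 'a)" assume c: "c \<in> CA"
    obtain J where "finite J" "\<forall>y z. (\<forall>j\<in>J. y j = z j) \<longrightarrow> c y 0 = c z 0"
      using CA_uniform[OF c] by blast
    then show "c \<in> (\<Union>J\<in>Collect finite. A J)" using c unfolding A_def by blast
  qed
  then have "CA = (\<Union>J\<in>Collect finite. A J)" by (auto simp: A_def)
  moreover have "countable (\<Union>J\<in>Collect finite. A J)"
    by (rule countable_UN[OF countable_Collect_finite]) (auto intro: countable_finite fin)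
  ultimately show ?thesis by simp
qed

lemma topspace_pw[simp]: "topspace pointwise_top = CA"
  unfolding pointwise_top_def topology_generated_by_topspace
proof
  show "\<Union> {U_sub x a |x a. True} \<subseteq> CA" by (auto simp: U_sub_def)
  show "CA \<subseteq> \<Union> {U_sub x a |x a. True}"
  proof
    fix c assume c: "c \<in> CA"
    then have "c \<in> U_sub undefined (c undefined 0)" by (simp add: U_sub_def)
    then show "c \<in> \<Union> {U_sub x a |x a. True}" by blast
  qed
qed

lemma open_U_sub: "openin pointwise_top (U_sub x a)"
  unfolding pointwise_top_def by (rule topology_generated_by_Basis) blast

lemma closed_U_sub: "closedin pointwise_top (U_sub x a)"
proof -
  have "topspace pointwise_top - U_sub x a = \<Union>{U_sub x b |b. b \<noteq> a}"
  proof
    show "topspace pointwise_top - U_sub x a \<subseteq> \<Union>{U_sub x b |b. b \<noteq> a}"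
    proof
      fix d assume "d \<in> topspace pointwise_top - U_sub x a"
      then have "d \<in> U_sub x (d x 0)" "d x 0 \<noteq> a" by (auto simp: U_sub_def)
      then show "d \<in> \<Union>{U_sub x b |b. b \<noteq> a}" by blast
    qed
    show "\<Union>{U_sub x b |b. b \<noteq> a} \<subseteq> topspace pointwise_top - U_sub x a"
      by (auto simp: U_sub_def)
  qed
  moreover have "openin pointwise_top (\<Union>{U_sub x b |b. b \<noteq> a})"
    using open_U_sub by (intro openin_Union) auto
  moreover have "U_sub x a \<subseteq> topspace pointwise_top" by (auto simp: U_sub_def)
  ultimately show ?thesis unfolding closedin_def by simp
qed

definition basic where "basic c P = {d \<in> CA. \<forall>x\<in>P. d x 0 = c x 0}"

lemma basic_clopen: "finite P \<Longrightarrow> openin pointwise_top (basic c P) \<and> closedin pointwise_top (basic c P)"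
proof (induction P rule: finite_induct)
  case empty
  have "basic c {} = topspace pointwise_top" by (simp add: basic_def)
  then show ?case by (metis openin_topspace closedin_topspace)
next
  case (insert x F)
  have "basic c (insert x F) = U_sub x (c x 0) \<inter> basic c F" by (auto simp: basic_def U_sub_def)
  moreover have "openin pointwise_top (U_sub x (c x 0) \<inter> basic c F)"
    by (rule openin_Int[OF open_U_sub]) (use insert.IH in blast)
  moreover have "closedin pointwise_top (U_sub x (c x 0) \<inter> basic c F)"
    by (rule closedin_Int[OF closed_U_sub]) (use insert.IH in blast)
  ultimately show ?case by simp
qed

lemma basic_self: "c \<in> CA \<Longrightarrow> c \<in> basic c P" by (simp add: basic_def)

lemma open_basic_aux:
  assumes "generate_topology_on {U_sub x a | x a. True} U"
  shows "\<forall>d\<in>U. \<exists>P. finite P \<and> basic d P \<subseteq> U"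
  using assms
proof (induction rule: generate_topology_on.induct)
  case Empty then show ?case by simp
next
  case (Int a b)
  show ?case
  proof
    fix d assume d: "d \<in> a \<inter> b"
    obtain P1 where P1: "finite P1" "basic d P1 \<subseteq> a" using Int.IH(1) d by blast
    obtain P2 where P2: "finite P2" "basic d P2 \<subseteq> b" using Int.IH(2) d by blast
    have "basic d (P1 \<union> P2) \<subseteq> basic d P1" "basic d (P1 \<union> P2) \<subseteq> basic d P2"
      unfolding basic_def by blast+
    then have "basic d (P1 \<union> P2) \<subseteq> a \<inter> b" using P1(2) P2(2) by blast
    moreover have "finite (P1 \<union> P2)" using P1(1) P2(1) by simp
    ultimately show "\<exists>P. finite P \<and> basic d P \<subseteq> a \<inter> b" by blast
  qed
next
  case (UN K)
  show ?case
  proof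
    fix d assume "d \<in> \<Union>K"
    then obtain k where k: "k \<in> K" "d \<in> k" by blast
    then obtain P where "finite P" "basic d P \<subseteq> k" using UN.IH by blast
    then show "\<exists>P. finite P \<and> basic d P \<subseteq> \<Union>K" using k(1) by blast
  qed
next
  case (Basis s)
  then obtain x a where s: "s = U_sub x a" by blast
  show ?case
  proof
    fix d assume d: "d \<in> s"
    have "basic d {x} \<subseteq> s"
    proof
      fix e assume "e \<in> basic d {x}"
      then have "e \<in> CA" "e x 0 = d x 0" by (auto simp: basic_def)
      moreover have "d x 0 = a" using d by (simp add: s U_sub_def)
      ultimately show "e \<in> s" by (simp add: s U_sub_def)
    qed
    then show "\<exists>P. finite P \<and> basic d P \<subseteq> s" by blast
  qed
qed

lemma open_basic:
  assumes "openin pointwise_top U" "d \<in> U" shows "\<exists>P. finite P \<and> basic d P \<subseteq> U"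
proof -
  have "generate_topology_on {U_sub x a |x a. True} U"
    using assms(1) unfolding pointwise_top_def by (rule openin_topology_generated_by)
  from open_basic_aux[OF this] assms(2) show ?thesis by blast
qed

lemma id_CA: "id \<in> CA"
  by (simp add: CA_def)

lemma separate: "c \<in> CA \<Longrightarrow> d \<in> CA \<Longrightarrow> c \<noteq> d \<Longrightarrow> \<exists>y. c y 0 \<noteq> d y 0"
  using CA_ext by blast

lemma Hausdorff_pw: "Hausdorff_space pointwise_top"
  unfolding Hausdorff_space_def
proof (intro allI impI)
  fix c d assume a: "c \<in> topspace pointwise_top \<and> d \<in> topspace pointwise_top \<and> c \<noteq> d"
  then have cd: "c \<in> CA" "d \<in> CA" "c \<noteq> d" by auto
  obtain y where y: "c y 0 \<noteq> d y 0" using separate[OF cd] by blast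
  have 1: "c \<in> U_sub y (c y 0)" using cd(1) by (simp add: U_sub_def)
  have 2: "d \<in> U_sub y (d y 0)" using cd(2) by (simp add: U_sub_def)
  have 3: "disjnt (U_sub y (c y 0)) (U_sub y (d y 0))" using y unfolding U_sub_def disjnt_def by auto
  show "\<exists>U V. openin pointwise_top U \<and> openin pointwise_top V \<and> c \<in> U \<and> d \<in> V \<and> disjnt U V"
    by (rule exI[of _ "U_sub y (c y 0)"], rule exI[of _ "U_sub y (d y 0)"]) (simp add: 1 2 3 open_U_sub)
qed

lemma totdisc_pw: "totally_disconnected_space pointwise_top"
  unfolding totally_disconnected_space_def
proof (intro allI impI)
  fix S assume S: "S \<subseteq> topspace pointwise_top \<and> connectedin pointwise_top S"
  have "c = d" if cS: "c \<in> S" and dS: "d \<in> S" for c d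
  proof (rule ccontr)
    assume ne: "c \<noteq> d"
    have cd: "c \<in> CA" "d \<in> CA" using S cS dS by auto
    obtain y where y: "c y 0 \<noteq> d y 0" using separate[OF cd ne] by blast
    have "S \<subseteq> U_sub y (c y 0) \<or> disjnt S (U_sub y (c y 0))"
      by (rule connectedin_clopen_cases) (use S open_U_sub closed_U_sub in auto)
    moreover have "c \<in> U_sub y (c y 0)" using cd by (simp add: U_sub_def)
    moreover have "d \<notin> U_sub y (c y 0)" using y by (simp add: U_sub_def)
    ultimately show False using cS dS unfolding disjnt_def by blast
  qed
  then show "\<exists>a. S \<subseteq> {a}" by blast
qed



definition modx :: "('a \<Rightarrow> 'a) \<Rightarrow> ((int \<Rightarrow> 'a) \<Rightarrow> (int \<Rightarrow> 'a)) \<Rightarrow> (int \<Rightarrow> 'a) set \<Rightarrow> (int \<Rightarrow> 'a) \<Rightarrow> (int \<Rightarrow> 'a)" where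
  "modx f c S y = (\<lambda>i. if sh i y \<in> S then f (c y i) else c y i)"

lemma cantor_cont_iff:
  "continuous_map X cantor_top g \<longleftrightarrow> (\<forall>i. continuous_map X (discrete_topology UNIV) (\<lambda>y. g y i))"
  by (simp add: cantor_top_def continuous_map_componentwise_UNIV)

lemma modx_0: "modx f c S x 0 = (if x \<in> S then f (c x 0) else c x 0)"
  by (simp add: modx_def sh_def)

lemma modx_CA:
  assumes c: "c \<in> CA" and J: "finite J" and S: "\<And>y z. (\<forall>j\<in>J. y j = z j) \<Longrightarrow> (y \<in> S \<longleftrightarrow> z \<in> S)"
  shows "modx f c S \<in> CA"
proof -
  have "continuous_map cantor_top (discrete_topology UNIV) (\<lambda>y. modx f c S y i)" for i
    unfolding cont_disc_iff
  proof
    fix y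
    obtain Jc where Jc: "finite Jc" "\<And>z. (\<forall>j\<in>Jc. z j = y j) \<Longrightarrow> c z i = c y i"
      using CA_local[OF c, of y i] by blast
    show "\<exists>J'. finite J' \<and> (\<forall>z. (\<forall>j\<in>J'. z j = y j) \<longrightarrow> modx f c S z i = modx f c S y i)"
    proof (intro exI conjI allI impI)
      show "finite (Jc \<union> (\<lambda>j. j + i) ` J)" using Jc J by simp
      fix z assume z: "\<forall>j\<in>Jc \<union> (\<lambda>j. j + i) ` J. z j = y j"
      have "sh i z \<in> S \<longleftrightarrow> sh i y \<in> S" by (rule S) (use z in \<open>auto simp: sh_def\<close>)
      moreover have "c z i = c y i" by (rule Jc(2)) (use z in auto)
      ultimately show "modx f c S z i = modx f c S y i" by (simp add: modx_def)
    qed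
  qed
  then have "continuous_map cantor_top cantor_top (modx f c S)" using cantor_cont_iff by blast
  moreover have "modx f c S (Defs.shift y) = Defs.shift (modx f c S y)" for y
  proof -
    have eq1: "sh i (Defs.shift y) = sh (i+1) y" for i by (auto simp: sh_def Defs.shift_def algebra_simps)
    have eq2: "c (Defs.shift y) i = c y (i+1)" for i using CA_shift[OF c] by (simp add: Defs.shift_def)
    show ?thesis
    proof (rule ext)
      fix i
      have "modx f c S (Defs.shift y) i = (if sh (i+1) y \<in> S then f (c y (i+1)) else c y (i+1))"
        by (simp add: modx_def eq1 eq2)
      moreover have "Defs.shift (modx f c S y) i = modx f c S y (i+1)" by (simp add: Defs.shift_def)
      ultimately show "modx f c S (Defs.shift y) i = Defs.shift (modx f c S y) i" by (simp add: modx_def)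
    qed
  qed
  ultimately show ?thesis by (auto simp: CA_def fun_eq_iff)
qed

lemma diag:
  fixes f :: "'a \<Rightarrow> 'a"
  assumes "countable (P :: (int \<Rightarrow> 'a) set)" "\<And>x. f x \<noteq> x"
  shows "\<exists>z. z \<notin> P"
proof (cases "P = {}")
  case True then show ?thesis by blast
next
  case False
  define e where "e = from_nat_into P"
  have P: "P = range e" using False assms(1) by (simp add: e_def)
  define z where "z = (\<lambda>j. f (e (nat j) j))"
  have "z \<noteq> e n" for n
  proof
    assume "z = e n"
    then have "z (int n) = e n (int n)" by simp
    then show False using assms(2) by (simp add: z_def)
  qed
  then show ?thesis using P by blast
qed

lemma no_cnb:
  assumes f: "\<And>x::'a. f x \<noteq> x" and c: "(c :: (int \<Rightarrow> 'a) \<Rightarrow> (int \<Rightarrow> 'a)) \<in> CA"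
  shows "\<not> countable_nbhd_basis_at pointwise_top c"
proof
  assume "countable_nbhd_basis_at pointwise_top c"
  then obtain B where B0: "countable B \<and> (\<forall>N \<in> B. N \<subseteq> topspace pointwise_top \<and> c \<in> pointwise_top interior_of N) \<and>
          (\<forall>V. V \<subseteq> topspace pointwise_top \<and> c \<in> pointwise_top interior_of V \<longrightarrow> (\<exists>N \<in> B. N \<subseteq> V))"
    unfolding countable_nbhd_basis_at_def by blast
  have B: "countable B" "\<And>N. N \<in> B \<Longrightarrow> N \<subseteq> CA \<and> c \<in> pointwise_top interior_of N"
    "\<And>V. V \<subseteq> CA \<Longrightarrow> c \<in> pointwise_top interior_of V \<Longrightarrow> \<exists>N\<in>B. N \<subseteq> V"
    using B0 unfolding topspace_pw by blast+
  have "\<forall>N\<in>B. \<exists>P. finite P \<and> basic c P \<subseteq> N"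
  proof
    fix N assume N: "N \<in> B"
    have "c \<in> pointwise_top interior_of N" using B(2)[OF N] by blast
    then obtain P where P: "finite P" "basic c P \<subseteq> pointwise_top interior_of N"
      using open_basic[OF openin_interior_of] by blast
    have "basic c P \<subseteq> N" using P(2) interior_of_subset[of pointwise_top N] by (rule order_trans)
    then show "\<exists>P. finite P \<and> basic c P \<subseteq> N" using P(1) by blast
  qed
  then have "\<exists>PN. \<forall>N\<in>B. finite (PN N) \<and> basic c (PN N) \<subseteq> N" by (rule bchoice)
  then obtain PN where PN: "\<And>N. N \<in> B \<Longrightarrow> finite (PN N) \<and> basic c (PN N) \<subseteq> N" by blast
  have "countable (\<Union>N\<in>B. PN N)"
  proof (rule countable_UN[OF B(1)])
    fix N assume "N \<in> B" then show "countable (PN N)" using PN by (simp add: countable_finite)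
  qed
  from diag[OF this f] obtain z where z: "z \<notin> (\<Union>N\<in>B. PN N)" by blast
  define V where "V = U_sub z (c z 0)"
  have "V \<subseteq> CA" by (auto simp: V_def U_sub_def)
  moreover have "c \<in> pointwise_top interior_of V"
  proof -
    have "openin pointwise_top V" by (simp add: V_def open_U_sub)
    moreover have "c \<in> V" using c by (simp add: V_def U_sub_def)
    ultimately show ?thesis by (simp add: interior_of_openin)
  qed
  ultimately obtain N where N: "N \<in> B" "N \<subseteq> V" using B(3) by blast
  define Q where "Q = PN N"
  have Q1: "finite Q" and Q2: "basic c Q \<subseteq> V" using PN[OF N(1)] N(2) by (auto simp: Q_def)
  have Q3: "z \<notin> Q" using z N(1) by (auto simp: Q_def)
  have "\<forall>q\<in>Q. \<exists>j. q j \<noteq> z j"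
  proof
    fix q assume "q \<in> Q"
    then have "q \<noteq> z" using Q3 by blast
    then show "\<exists>j. q j \<noteq> z j" by (simp add: fun_eq_iff)
  qed
  then have "\<exists>jq. \<forall>q\<in>Q. q (jq q) \<noteq> z (jq q)" by (rule bchoice)
  then obtain jq where jq: "\<And>q. q \<in> Q \<Longrightarrow> q (jq q) \<noteq> z (jq q)" by blast
  define S where "S = {y. \<forall>j\<in>jq ` Q. y j = z j}"
  define d where "d = modx f c S"
  have d: "d \<in> CA" unfolding d_def
    by (rule modx_CA[OF c, of "jq ` Q"]) (use Q1 in \<open>auto simp: S_def\<close>)
  have "d q 0 = c q 0" if "q \<in> Q" for q
  proof -
    have "q \<notin> S" using jq[OF that] that by (auto simp: S_def)
    then show ?thesis by (simp add: d_def modx_0)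
  qed
  then have "d \<in> basic c Q" using d by (auto simp: basic_def)
  then have "d \<in> V" using Q2 by blast
  then have "d z 0 = c z 0" by (simp add: V_def U_sub_def)
  moreover have "d z 0 = f (c z 0)" by (simp add: d_def modx_0 S_def)
  ultimately show False using f by metis
qed



definition MM :: "(int \<Rightarrow> 'a::finite) measure" where
  "MM = PiM UNIV (\<lambda>_. measure_pmf (pmf_of_set UNIV))"

lemma space_MM[simp]: "space MM = UNIV"
  by (simp add: MM_def space_PiM)

lemma prob_MM: "prob_space MM"
  unfolding MM_def by (rule prob_space_PiM) (simp add: prob_space_measure_pmf)

definition cyl :: "int set \<Rightarrow> (int \<Rightarrow> 'a) \<Rightarrow> (int \<Rightarrow> 'a) set" where
  "cyl J w = {x. \<forall>j\<in>J. x j = w j}"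

lemma cyl_emb: "cyl J w = prod_emb UNIV (\<lambda>_. measure_pmf (pmf_of_set UNIV)) J (Pi\<^sub>E J (\<lambda>j. {w j}))"
  by (auto simp: cyl_def prod_emb_def PiE_iff)

lemma cyl_sets: "finite J \<Longrightarrow> cyl J w \<in> sets (MM :: (int \<Rightarrow> 'a::finite) measure)"
  unfolding cyl_emb MM_def by (rule sets_PiM_I) auto

lemma cyl_measure:
  assumes "finite J"
  shows "measure (MM :: (int \<Rightarrow> 'a::finite) measure) (cyl J w) = (1 / real CARD('a)) ^ card J"
proof -
  have "emeasure (MM :: (int \<Rightarrow> 'a) measure) (cyl J w) =
        (\<Prod>j\<in>J. emeasure (measure_pmf (pmf_of_set (UNIV::'a set))) {w j})"
    unfolding cyl_emb MM_def
    by (rule emeasure_PiM_emb) (auto simp: prob_space_measure_pmf assms)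
  also have "\<dots> = (\<Prod>j\<in>J. ennreal (1 / real CARD('a)))"
    by (simp add: emeasure_pmf_single)
  also have "\<dots> = ennreal ((1 / real CARD('a)) ^ card J)"
    by (simp add: ennreal_power)
  finally show ?thesis by (simp add: measure_def)
qed

lemma sets_detJ:
  assumes J: "finite J" and S: "\<And>y z. (\<forall>j\<in>J. y j = z j) \<Longrightarrow> (y \<in> S \<longleftrightarrow> z \<in> S)"
  shows "S \<in> sets (MM :: (int \<Rightarrow> 'a::finite) measure)"
proof -
  define T where "T = {t::int\<Rightarrow>'a. \<forall>x. (x \<in> J \<longrightarrow> t x \<in> UNIV) \<and> (x \<notin> J \<longrightarrow> t x = undefined)}"
  have fT: "finite T" unfolding T_def by (rule finite_set_of_finite_funs) (use J in auto)
  define tr where "tr y = (\<lambda>j. if j \<in> J then y j else undefined)" for y :: "int \<Rightarrow> 'a"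
  have "S = (\<Union>t\<in>T \<inter> S. cyl J t)"
  proof
    show "S \<subseteq> (\<Union>t\<in>T \<inter> S. cyl J t)"
    proof
      fix y assume y: "y \<in> S"
      have "tr y \<in> S" using S[of y "tr y"] y by (auto simp: tr_def)
      moreover have "tr y \<in> T" by (auto simp: tr_def T_def)
      moreover have "y \<in> cyl J (tr y)" by (auto simp: tr_def cyl_def)
      ultimately show "y \<in> (\<Union>t\<in>T \<inter> S. cyl J t)" by blast
    qed
    show "(\<Union>t\<in>T \<inter> S. cyl J t) \<subseteq> S"
      using S by (auto simp: cyl_def)
  qed
  moreover have "(\<Union>t\<in>T \<inter> S. cyl J t) \<in> sets (MM :: (int \<Rightarrow> 'a) measure)"
    using fT J cyl_sets by (intro sets.finite_UN) auto
  ultimately show ?thesis by simp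
qed

lemma CA_diff_sets:
  assumes "d \<in> CA" "e \<in> CA"
  shows "{x. d x 0 \<noteq> e x 0} \<in> sets (MM :: (int \<Rightarrow> 'a::finite) measure)"
proof -
  obtain J1 where J1: "finite J1" "\<forall>y z. (\<forall>j\<in>J1. y j = z j) \<longrightarrow> d y 0 = d z 0"
    using CA_uniform[OF assms(1)] by blast
  obtain J2 where J2: "finite J2" "\<forall>y z. (\<forall>j\<in>J2. y j = z j) \<longrightarrow> e y 0 = e z 0"
    using CA_uniform[OF assms(2)] by blast
  show ?thesis
  proof (rule sets_detJ[of "J1 \<union> J2"])
    show "finite (J1 \<union> J2)" using J1 J2 by simp
    fix y z :: "int \<Rightarrow> 'a" assume yz: "\<forall>j\<in>J1 \<union> J2. y j = z j"
    have "d y 0 = d z 0" using J1(2) yz by blast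
    moreover have "e y 0 = e z 0" using J2(2) yz by blast
    ultimately show "y \<in> {x. d x 0 \<noteq> e x 0} \<longleftrightarrow> z \<in> {x. d x 0 \<noteq> e x 0}" by simp
  qed
qed

lemma not_seq:
  assumes card: "CARD('a::finite) \<ge> 2" and f: "\<And>x::'a. f x \<noteq> x"
  shows "\<not> sequential_space (pointwise_top :: ((int \<Rightarrow> 'a) \<Rightarrow> (int \<Rightarrow> 'a)) topology)"
proof
  assume seq: "sequential_space (pointwise_top :: ((int \<Rightarrow> 'a) \<Rightarrow> (int \<Rightarrow> 'a)) topology)"
  interpret P: prob_space "MM :: (int \<Rightarrow> 'a) measure" by (rule prob_MM)
  define Dd where "Dd d = {x. d x 0 \<noteq> x 0}" for d :: "(int \<Rightarrow> 'a) \<Rightarrow> (int \<Rightarrow> 'a)"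
  have Dd_sets: "Dd d \<in> sets MM" if "d \<in> CA" for d
    using CA_diff_sets[OF that id_CA] by (simp add: Dd_def)
  define S0 where "S0 = {d \<in> CA. measure MM (Dd d) \<ge> 1/2}"
  have notcl: "\<not> closedin pointwise_top S0"
  proof
    assume "closedin pointwise_top S0"
    then have "openin pointwise_top (CA - S0)" by (simp add: closedin_def)
    moreover have "id \<in> CA - S0" using id_CA by (simp add: S0_def Dd_def)
    ultimately obtain P where P: "finite P" "basic id P \<subseteq> CA - S0" using open_basic by blast
    define m where "m = card P"
    define J where "J = {0..int m}"
    have fJ: "finite J" and cJ: "card J = Suc m" by (auto simp: J_def)
    define S where "S = {y. \<not> (\<exists>p\<in>P. \<forall>j\<in>J. y j = p j)}"
    define d where "d = modx f id S"
    have dCA: "d \<in> CA" unfolding d_def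
      by (rule modx_CA[OF id_CA fJ]) (auto simp: S_def)
    have "d p 0 = id p 0" if "p \<in> P" for p
    proof -
      have "p \<notin> S" using that by (auto simp: S_def)
      then show ?thesis by (simp add: d_def modx_0)
    qed
    then have dB: "d \<in> basic id P" using dCA by (auto simp: basic_def)
    have DdS: "Dd d = S" using f by (auto simp: Dd_def d_def modx_0)
    have S_eq: "S = space MM - (\<Union>p\<in>P. cyl J p)" by (auto simp: S_def cyl_def)
    have U_sets: "(\<Union>p\<in>P. cyl J p) \<in> sets MM"
      using P(1) fJ cyl_sets by (intro sets.finite_UN) auto
    have "measure MM (\<Union>p\<in>P. cyl J p) \<le> (\<Sum>p\<in>P. measure MM (cyl J p))"
      using P(1) fJ cyl_sets by (intro measure_UNION_le) auto
    also have "\<dots> = real m * (1 / real CARD('a)) ^ Suc m"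
    proof -
      have cm: "measure MM (cyl J p) = (1 / real CARD('a)) ^ Suc m" for p :: "int \<Rightarrow> 'a"
        using cyl_measure[OF fJ, of p] cJ by simp
      show ?thesis by (simp add: cm m_def)
    qed
    also have "\<dots> \<le> real m * (1 / 2) ^ Suc m"
      using card by (intro mult_left_mono power_mono) (auto simp: field_simps)
    also have "\<dots> \<le> 1 / 2"
    proof -
      have "real m \<le> 2 ^ m" using less_exp[of m] by (metis of_nat_le_iff of_nat_numeral of_nat_power less_imp_le)
      then show ?thesis by (simp add: field_simps)
    qed
    finally have "measure MM (\<Union>p\<in>P. cyl J p) \<le> 1/2" .
    then have "measure MM (Dd d) \<ge> 1/2"
      unfolding DdS S_eq using P.prob_compl[OF U_sets] by simp
    then have "d \<in> S0" using dCA by (simp add: S0_def)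
    then show False using dB P(2) by blast
  qed
  have seqcl: "sequentially_closedin pointwise_top S0"
    unfolding sequentially_closedin_def
  proof (intro conjI allI impI)
    show "S0 \<subseteq> topspace pointwise_top" by (auto simp: S0_def)
    fix s l assume sl: "(\<forall>n. s n \<in> S0) \<and> limitin pointwise_top s l sequentially"
    then have lCA: "l \<in> CA" by (simp add: limitin_def)
    have sCA: "s n \<in> CA" for n using sl by (simp add: S0_def)
    have ev: "eventually (\<lambda>n. s n x 0 = l x 0) sequentially" for x
    proof -
      have "l \<in> U_sub x (l x 0)" using lCA by (simp add: U_sub_def)
      moreover have lim: "\<forall>U. openin pointwise_top U \<and> l \<in> U \<longrightarrow> eventually (\<lambda>n. s n \<in> U) sequentially"
        using sl unfolding limitin_def by blast
      ultimately have "eventually (\<lambda>n. s n \<in> U_sub x (l x 0)) sequentially"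
        using lim[rule_format, OF conjI[OF open_U_sub]] by blast
      then show ?thesis by (rule eventually_mono) (simp add: U_sub_def)
    qed
    define G where "G n = {x. s n x 0 \<noteq> l x 0}" for n
    define F where "F N = (\<Union>n. G (N + n))" for N
    have G_sets: "G n \<in> sets MM" for n unfolding G_def by (rule CA_diff_sets[OF sCA lCA])
    have F_sets: "F N \<in> sets MM" for N unfolding F_def using G_sets by (intro sets.countable_UN) auto
    have dec: "decseq F"
    proof (rule decseq_SucI)
      fix N show "F (Suc N) \<subseteq> F N" unfolding F_def
        by (auto, metis add_Suc_shift add_Suc_right)
    qed
    have empty: "(\<Inter>i. F i) = {}"
    proof -
      have "x \<notin> (\<Inter>i. F i)" for x
      proof -
        obtain N0 where "\<And>n. n \<ge> N0 \<Longrightarrow> s n x 0 = l x 0" using ev[of x] unfolding eventually_sequentially by blast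
        then have "x \<notin> F N0" by (auto simp: F_def G_def)
        then show ?thesis by blast
      qed
      then show ?thesis by blast
    qed
    have lim: "(\<lambda>N. measure MM (F N)) \<longlonglongrightarrow> 0"
      using Lim_measure_decseq[of F MM] F_sets dec empty by (auto simp: P.emeasure_finite)
    have bound: "1/2 \<le> measure MM (Dd l) + measure MM (F N)" for N
    proof -
      have "1/2 \<le> measure MM (Dd (s N))" using sl by (simp add: S0_def)
      also have "\<dots> \<le> measure MM (Dd l \<union> F N)"
      proof (rule P.finite_measure_mono)
        show "Dd (s N) \<subseteq> Dd l \<union> F N"
        proof
          fix x assume "x \<in> Dd (s N)"
          then have "l x 0 \<noteq> x 0 \<or> x \<in> G (N + 0)" by (auto simp: Dd_def G_def)
          then show "x \<in> Dd l \<union> F N" unfolding F_def Dd_def by blast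
        qed
        show "Dd l \<union> F N \<in> sets MM" using Dd_sets[OF lCA] F_sets by auto
      qed
      also have "\<dots> \<le> measure MM (Dd l) + measure MM (F N)"
        using Dd_sets[OF lCA] F_sets by (intro measure_Un_le) auto
      finally show ?thesis .
    qed
    have "(\<lambda>N. measure MM (Dd l) + measure MM (F N)) \<longlonglongrightarrow> measure MM (Dd l) + 0"
      by (intro tendsto_add tendsto_const lim)
    then have "1/2 \<le> measure MM (Dd l) + 0"
      by (rule LIMSEQ_le_const) (use bound in auto)
    then show "l \<in> S0" using lCA by (simp add: S0_def)
  qed
  show False using seq notcl seqcl unfolding sequential_space_def by blast
qed



lemma two_elems: assumes "CARD('a::finite) \<ge> 2" shows "\<exists>a b::'a. a \<noteq> b"
proof (rule ccontr)
  assume "\<not> (\<exists>a b::'a. a \<noteq> b)"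
  then have "(UNIV :: 'a set) = {undefined}" by auto
  then have "CARD('a) = card {undefined::'a}" by (simp only:)
  then have "CARD('a) = 1" by simp
  then show False using assms by simp
qed

theorem theorem3p4:
  assumes "CARD('a::finite) \<ge> 2"
  shows "countable (CA :: ((int \<Rightarrow> 'a) \<Rightarrow> (int \<Rightarrow> 'a)) set)
    \<and> topspace (pointwise_top :: ((int \<Rightarrow> 'a) \<Rightarrow> (int \<Rightarrow> 'a)) topology) = CA
    \<and> Hausdorff_space (pointwise_top :: ((int \<Rightarrow> 'a) \<Rightarrow> (int \<Rightarrow> 'a)) topology)
    \<and> \<not> compact_space (pointwise_top :: ((int \<Rightarrow> 'a) \<Rightarrow> (int \<Rightarrow> 'a)) topology)
    \<and> no_isolated_points (pointwise_top :: ((int \<Rightarrow> 'a) \<Rightarrow> (int \<Rightarrow> 'a)) topology)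
    \<and> totally_disconnected_space (pointwise_top :: ((int \<Rightarrow> 'a) \<Rightarrow> (int \<Rightarrow> 'a)) topology)
    \<and> first_category (pointwise_top :: ((int \<Rightarrow> 'a) \<Rightarrow> (int \<Rightarrow> 'a)) topology)
    \<and> (\<forall>c \<in> (CA :: ((int \<Rightarrow> 'a) \<Rightarrow> (int \<Rightarrow> 'a)) set).
          \<not> countable_nbhd_basis_at pointwise_top c)
    \<and> \<not> first_countable (pointwise_top :: ((int \<Rightarrow> 'a) \<Rightarrow> (int \<Rightarrow> 'a)) topology)
    \<and> \<not> metrizable_space (pointwise_top :: ((int \<Rightarrow> 'a) \<Rightarrow> (int \<Rightarrow> 'a)) topology)
    \<and> \<not> second_countable (pointwise_top :: ((int \<Rightarrow> 'a) \<Rightarrow> (int \<Rightarrow> 'a)) topology)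
    \<and> normal_space (pointwise_top :: ((int \<Rightarrow> 'a) \<Rightarrow> (int \<Rightarrow> 'a)) topology)
    \<and> \<not> sequential_space (pointwise_top :: ((int \<Rightarrow> 'a) \<Rightarrow> (int \<Rightarrow> 'a)) topology)"
proof -
  let ?X = "pointwise_top :: ((int \<Rightarrow> 'a) \<Rightarrow> (int \<Rightarrow> 'a)) topology"
  have idCA: "(id :: (int \<Rightarrow> 'a) \<Rightarrow> (int \<Rightarrow> 'a)) \<in> CA" by (rule id_CA)
  obtain a b :: 'a where ab: "a \<noteq> b" using two_elems[OF assms] by blast
  define f where "f x = (if x = a then b else a)" for x
  have f: "\<And>x. f x \<noteq> x" using ab by (simp add: f_def)
  have cnb: "\<forall>c \<in> (CA :: ((int \<Rightarrow> 'a) \<Rightarrow> (int \<Rightarrow> 'a)) set). \<not> countable_nbhd_basis_at pointwise_top c"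
    using no_cnb[OF f] by blast
  have noiso: "no_isolated_points ?X"
    unfolding no_isolated_points_def
  proof (intro ballI notI)
    fix p assume p: "p \<in> topspace ?X" and op: "openin ?X {p}"
    have "countable_nbhd_basis_at ?X p"
      unfolding countable_nbhd_basis_at_def
    proof (intro exI[of _ "{{p}}"] conjI)
      show "countable {{p}}" by simp
      show "\<forall>N\<in>{{p}}. N \<subseteq> topspace ?X \<and> p \<in> ?X interior_of N"
        using p op by (simp add: interior_of_openin)
      show "\<forall>V. V \<subseteq> topspace ?X \<and> p \<in> ?X interior_of V \<longrightarrow> (\<exists>N\<in>{{p}}. N \<subseteq> V)"
        using interior_of_subset by fastforce
    qed
    then show False using cnb p by simp
  qed
  have T1: "t1_space ?X" by (rule Hausdorff_imp_t1_space[OF Hausdorff_pw])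
  have closed_single: "closedin ?X {c}" if "c \<in> CA" for c
    using T1 that unfolding t1_space_closedin_singleton by simp
  have int_single: "?X interior_of {c} = {}" if c: "c \<in> CA" for c
  proof (rule ccontr)
    assume "?X interior_of {c} \<noteq> {}"
    then have "?X interior_of {c} = {c}" using interior_of_subset[of ?X "{c}"] by blast
    then have "openin ?X {c}" by (metis openin_interior_of)
    then show False using noiso c unfolding no_isolated_points_def by simp
  qed
  have fcat: "first_category ?X"
    unfolding first_category_def
  proof (intro exI[of _ "(\<lambda>c. {c}) ` CA"] conjI ballI)
    show "countable ((\<lambda>c. {c}) ` (CA :: ((int \<Rightarrow> 'a) \<Rightarrow> (int \<Rightarrow> 'a)) set))"
      by (intro countable_image countable_CA)
    show "\<Union>((\<lambda>c. {c}) ` CA) = topspace ?X" by simp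
    fix S assume "S \<in> (\<lambda>c. {c}) ` (CA :: ((int \<Rightarrow> 'a) \<Rightarrow> (int \<Rightarrow> 'a)) set)"
    then obtain c where c: "c \<in> CA" "S = {c}" by blast
    show "nowhere_dense_in ?X S"
      unfolding nowhere_dense_in_def c(2)
      using c(1) closure_of_closedin[OF closed_single[OF c(1)]] int_single[OF c(1)] by simp
  qed
  have reg: "regular_space ?X"
    unfolding neighbourhood_base_of_closedin[symmetric] neighbourhood_base_of_def neighbourhood_base_at_def
  proof (intro ballI allI impI)
    fix x W assume x: "x \<in> topspace ?X" and W: "openin ?X W \<and> x \<in> W"
    obtain P where P: "finite P" "basic x P \<subseteq> W" using open_basic W by blast
    have "openin ?X (basic x P)" "closedin ?X (basic x P)" using basic_clopen[OF P(1)] by auto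
    moreover have "x \<in> basic x P" using x by (simp add: basic_self)
    ultimately show "\<exists>U V. openin ?X U \<and> closedin ?X V \<and> x \<in> U \<and> U \<subseteq> V \<and> V \<subseteq> W"
      using P(2) by blast
  qed
  have normal: "normal_space ?X"
    by (rule regular_Lindelof_imp_normal_space[OF reg countable_imp_Lindelof_space]) (simp add: countable_CA)
  have ncomp: "\<not> compact_space ?X"
  proof
    assume "compact_space ?X"
    then have lc: "locally_compact_space ?X" by (rule compact_imp_locally_compact_space)
    have "?X interior_of \<Union>((\<lambda>c. {c}) ` CA) = {}"
    proof (rule Baire_category_alt)
      show "completely_metrizable_space ?X \<or> locally_compact_space ?X \<and> regular_space ?X"
        using lc reg by blast
      show "countable ((\<lambda>c. {c}) ` (CA :: ((int \<Rightarrow> 'a) \<Rightarrow> (int \<Rightarrow> 'a)) set))"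
        by (intro countable_image countable_CA)
      fix T assume "T \<in> (\<lambda>c. {c}) ` (CA :: ((int \<Rightarrow> 'a) \<Rightarrow> (int \<Rightarrow> 'a)) set)"
      then obtain c where c: "c \<in> CA" "T = {c}" by blast
      show "closedin ?X T \<and> ?X interior_of T = {}" using closed_single[OF c(1)] int_single[OF c(1)] c(2) by simp
    qed
    moreover have "\<Union>((\<lambda>c. {c}) ` CA) = topspace ?X" by simp
    ultimately have "topspace ?X = {}" by (metis interior_of_topspace)
    then show False using idCA by simp
  qed
  have nfc: "\<not> first_countable ?X"
  proof
    assume "first_countable ?X"
    then obtain Bs where Bs: "countable Bs" "\<And>V. V \<in> Bs \<Longrightarrow> openin ?X V"
      "\<And>U. openin ?X U \<Longrightarrow> id \<in> U \<Longrightarrow> \<exists>V\<in>Bs. id \<in> V \<and> V \<subseteq> U"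
      unfolding first_countable_def using idCA by (metis topspace_pw)
    have "countable_nbhd_basis_at ?X id"
      unfolding countable_nbhd_basis_at_def
    proof (intro exI[of _ "{V \<in> Bs. id \<in> V}"] conjI)
      show "countable {V \<in> Bs. id \<in> V}" using Bs(1) by simp
      show "\<forall>N\<in>{V \<in> Bs. id \<in> V}. N \<subseteq> topspace ?X \<and> id \<in> ?X interior_of N"
      proof
        fix N assume "N \<in> {V \<in> Bs. id \<in> V}"
        then have oN: "openin ?X N" and iN: "id \<in> N" using Bs(2) by auto
        show "N \<subseteq> topspace ?X \<and> id \<in> ?X interior_of N"
          using openin_subset[OF oN] interior_of_openin[OF oN] iN by simp
      qed
      show "\<forall>V. V \<subseteq> topspace ?X \<and> id \<in> ?X interior_of V \<longrightarrow> (\<exists>N\<in>{V \<in> Bs. id \<in> V}. N \<subseteq> V)"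
      proof (intro allI impI)
        fix V assume V: "V \<subseteq> topspace ?X \<and> id \<in> ?X interior_of V"
        obtain W where W: "W \<in> Bs" "id \<in> W" "W \<subseteq> ?X interior_of V"
          using Bs(3)[OF openin_interior_of] V by blast
        then show "\<exists>N\<in>{V \<in> Bs. id \<in> V}. N \<subseteq> V" using interior_of_subset[of ?X V] by blast
      qed
    qed
    then show False using cnb idCA by blast
  qed
  have nmet: "\<not> metrizable_space ?X" using nfc metrizable_imp_first_countable by blast
  have nsc: "\<not> second_countable ?X" using nfc second_countable_imp_first_countable by blast
  have nseq: "\<not> sequential_space ?X" by (rule not_seq[OF assms f])
  show ?thesis
    using countable_CA Hausdorff_pw totdisc_pw ncomp noiso fcat cnb nfc nmet nsc normal nseq
    by simp
qed


end
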